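(* Let $\mathcal{A}=\{x_0,x_1,\dots,x_n\}$ be a complex subspace arrangement in $\mathbb{C}^l$ with a linear order satisfying the ordering convention below, and let $\phi\colon D(\mathcal{A})\to D(\widetilde{\mathcal{A}''})$ be the linear map defined below. Then $\phi\circ d=d\circ\phi$.
   Context: A complex subspace arrangement in $\mathbb{C}^l$ is a finite set of complex linear subspaces of $\mathbb{C}^l$ with no two distinct members $x\subset y$. For a finite set $\mathcal{C}$ of linear subspaces of a complex vector space $W$ with a linear order, $D(\mathcal{C})$ is the cochain complex over $\mathbb{Q}$ with basis all subsets $\sigma\subseteq\mathcal{C}$, where with $\vee\sigma=\bigcap_{x\in\sigma}x$ ($\vee\emptyset=W$), $\deg\sigma=2\operatorname{codim}_W(\vee\sigma)-|\sigma|$ and for $\sigma=\{x_{i_1},\dots,x_{i_r}\}$ in increasing order, $d\sigma=\sum_{j:\vee(\sigma\setminus\{x_{i_j}\})=\vee\sigma}(-1)^j(\sigma\setminus\{x_{i_j}\})$. Setting: $\mathcal{A}'=\mathcal{A}\setminus\{x_0\}$; on $\mathcal{A}'$ define $y\sim z$ iff $x_0\cap y=x_0\cap z$, with equivalence classes $\mathcal{A}_1,\dots,\mathcal{A}_r$. The linear order on $\mathcal{A}$ is $x_0<x_1<\dots<x_n$ and is chosen so that if $i<j$, $y\in\mathcal{A}_i$, $z\in\mathcal{A}_j$, then $y<z$. Let $\widetilde{\mathcal{A}''}=\{x_0\cap y\mid y\in\mathcal{A}'\}$, a finite set of subspaces of $W=x_0$ whose elements correspond bijectively to the classes $\mathcal{A}_i$;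 order it by the order of the classes, and form $D(\widetilde{\mathcal{A}''})$ with ambient space $x_0$. Let $E=\{(y,z)\in\mathcal{A}'\times\mathcal{A}'\mid y\sim z,\ y\neq z\}$. Define $\phi$ on basis elements: $\phi(\sigma)=0$ if $x_0\notin\sigma$, or if $x_0\in\sigma$ and $\{y,z\}\subseteq\sigma$ for some $(y,z)\in E$; otherwise $\sigma=\{x_0,x_{i_1},\dots,x_{i_r}\}$ and $\phi(\sigma)=(-1)^r\{x_0\cap x_{i_1},\dots,x_0\cap x_{i_r}\}$ (in particular $\phi(\{x_0\})=\emptyset$). *)

theory Defs
  imports "HOL-Analysis.Analysis"
begin

text \<open>Complex linear subspaces of C^l = complex^'l, via the complex vector-space
structure vec (scalar multiplication *s) from Cartesian_Space.\<close>

definition csub :: "(complex ^ 'l) set \<Rightarrow> bool" where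
  "csub S \<longleftrightarrow> vec.subspace S"

text \<open>A complex subspace arrangement x_0,...,x_n (listed in its linear order):
distinct complex subspaces, no proper inclusions.\<close>
definition is_arrangement :: "nat \<Rightarrow> (nat \<Rightarrow> (complex ^ 'l) set) \<Rightarrow> bool" where
  "is_arrangement n x \<longleftrightarrow> inj_on x {0..n} \<and> (\<forall>i\<le>n. csub (x i))
     \<and> (\<forall>i\<le>n. \<forall>j\<le>n. x i \<subseteq> x j \<longrightarrow> i = j)"

text \<open>Cochain complex D(C): a cochain is a Q-valued function on subsets of C
(the coefficient of the basis element sigma); it is supported on Pow C.
The linear order on C is encoded by an injective key function.\<close>

definition join :: "'v set \<Rightarrow> 'v set set \<Rightarrow> 'v set" where
  "join W \<sigma> = W \<inter> \<Inter>\<sigma>"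

text \<open>position (1-based) of y in sigma listed in increasing order\<close>
definition rk :: "('v set \<Rightarrow> nat) \<Rightarrow> 'v set set \<Rightarrow> 'v set \<Rightarrow> nat" where
  "rk key \<sigma> y = card {z \<in> \<sigma>. key z \<le> key y}"

definition deg :: "(complex ^ 'l) set \<Rightarrow> (complex ^ 'l) set set \<Rightarrow> int" where
  "deg W \<sigma> = 2 * (int (vec.dim W) - int (vec.dim (join W \<sigma>))) - int (card \<sigma>)"

text \<open>coefficient of tau in d(sigma)\<close>
definition dcoef :: "'v set \<Rightarrow> ('v set \<Rightarrow> nat) \<Rightarrow> 'v set set \<Rightarrow> 'v set set \<Rightarrow> rat" where
  "dcoef W key \<sigma> \<tau> = (\<Sum>y\<in>\<sigma>. if \<tau> = \<sigma> - {y} \<and> join W \<tau> = join W \<sigma>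
                               then (-1) ^ rk key \<sigma> y else 0)"

definition dmap :: "'v set \<Rightarrow> 'v set set \<Rightarrow> ('v set \<Rightarrow> nat)
    \<Rightarrow> ('v set set \<Rightarrow> rat) \<Rightarrow> ('v set set \<Rightarrow> rat)" where
  "dmap W C key c = (\<lambda>\<tau>. \<Sum>\<sigma>\<in>Pow C. c \<sigma> * dcoef W key \<sigma> \<tau>)"

text \<open>coefficient of rho in phi(sigma)\<close>
definition phicoef :: "'v set \<Rightarrow> 'v set set \<Rightarrow> 'v set set \<Rightarrow> rat" where
  "phicoef x0 \<sigma> \<rho> =
     (if x0 \<in> \<sigma>
         \<and> \<not> (\<exists>y\<in>\<sigma> - {x0}. \<exists>z\<in>\<sigma> - {x0}. y \<noteq> z \<and> x0 \<inter> y = x0 \<inter> z)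
         \<and> \<rho> = (\<lambda>y. x0 \<inter> y) ` (\<sigma> - {x0})
      then (-1) ^ card (\<sigma> - {x0}) else 0)"

definition phimap :: "'v set \<Rightarrow> 'v set set \<Rightarrow> ('v set set \<Rightarrow> rat) \<Rightarrow> ('v set set \<Rightarrow> rat)" where
  "phimap x0 A c = (\<lambda>\<rho>. \<Sum>\<sigma>\<in>Pow A. c \<sigma> * phicoef x0 \<sigma> \<rho>)"

definition keyA :: "nat \<Rightarrow> (nat \<Rightarrow> 'v set) \<Rightarrow> 'v set \<Rightarrow> nat" where
  "keyA n x y = (LEAST i. i \<le> n \<and> x i = y)"

text \<open>order key of A''~ = {x_0 \<inter> y | y \<in> A'}: ordered by the order of the classes,
i.e. by the least index of a member of the corresponding class\<close>
definition keyA'' :: "nat \<Rightarrow> (nat \<Rightarrow> 'v set) \<Rightarrow> 'v set \<Rightarrow> nat" where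
  "keyA'' n x u = (LEAST i. 1 \<le> i \<and> i \<le> n \<and> x 0 \<inter> x i = u)"

end

theory Submission
  imports Defs
begin

lemma L1:
  assumes "finite A" "\<sigma> \<subseteq> A"
  shows "(\<Sum>\<tau>\<in>Pow A. dcoef W K \<sigma> \<tau> * g \<tau>) =
    (\<Sum>y\<in>\<sigma>. if join W (\<sigma> - {y}) = join W \<sigma> then (-1)^rk K \<sigma> y * g (\<sigma>-{y}) else 0)"
proof -
  have "(\<Sum>\<tau>\<in>Pow A. dcoef W K \<sigma> \<tau> * g \<tau>) = (\<Sum>\<tau>\<in>Pow A. \<Sum>y\<in>\<sigma>.
     (if \<tau> = \<sigma> - {y} \<and> join W \<tau> = join W \<sigma> then (-1)^rk K \<sigma> y else 0) * g \<tau>)"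
    by (simp add: dcoef_def sum_distrib_right)
  also have "\<dots> = (\<Sum>y\<in>\<sigma>. \<Sum>\<tau>\<in>Pow A.
     (if \<tau> = \<sigma> - {y} \<and> join W \<tau> = join W \<sigma> then (-1)^rk K \<sigma> y else 0) * g \<tau>)"
    by (rule sum.swap)
  also have "\<dots> = (\<Sum>y\<in>\<sigma>. if join W (\<sigma> - {y}) = join W \<sigma> then (-1)^rk K \<sigma> y * g (\<sigma>-{y}) else 0)"
  proof (rule sum.cong[OF refl])
    fix y assume "y \<in> \<sigma>"
    have m: "\<sigma> - {y} \<in> Pow A" using assms by auto
    have "(\<Sum>\<tau>\<in>Pow A. (if \<tau> = \<sigma> - {y} \<and> join W \<tau> = join W \<sigma> then (-1)^rk K \<sigma> y else 0) * g \<tau>)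
      = (\<Sum>\<tau>\<in>Pow A. if \<tau> = \<sigma> - {y} then (if join W (\<sigma> - {y}) = join W \<sigma> then (-1)^rk K \<sigma> y * g (\<sigma>-{y}) else 0) else 0)"
      by (rule sum.cong) auto
    also have "\<dots> = (if join W (\<sigma> - {y}) = join W \<sigma> then (-1)^rk K \<sigma> y * g (\<sigma>-{y}) else 0)"
      using m assms(1) by (simp add: sum.delta)
    finally show "(\<Sum>\<tau>\<in>Pow A. (if \<tau> = \<sigma> - {y} \<and> join W \<tau> = join W \<sigma> then (-1)^rk K \<sigma> y else 0) * g \<tau>)
      = (if join W (\<sigma> - {y}) = join W \<sigma> then (-1)^rk K \<sigma> y * g (\<sigma>-{y}) else 0)" .
  qed
  finally show ?thesis .
qed

lemma phicoef_alt: "phicoef x0 \<sigma> \<rho> = (if x0\<in>\<sigma> \<and> inj_on (\<lambda>y. x0\<inter>y) (\<sigma>-{x0}) \<and> \<rho> = (\<lambda>y. x0\<inter>y)`(\<sigma>-{x0})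
   then (-1)^card(\<sigma>-{x0}) else 0)"
  unfolding phicoef_def inj_on_def by (intro if_cong) blast+

lemma R1:
  assumes "finite C" "(\<lambda>y. x0\<inter>y)`(\<sigma>-{x0}) \<subseteq> C"
  shows "(\<Sum>\<rho>'\<in>Pow C. phicoef x0 \<sigma> \<rho>' * h \<rho>') = (if x0\<in>\<sigma> \<and> inj_on (\<lambda>y. x0\<inter>y) (\<sigma>-{x0})
     then (-1)^card(\<sigma>-{x0}) * h ((\<lambda>y. x0\<inter>y)`(\<sigma>-{x0})) else 0)"
proof -
  have "(\<Sum>\<rho>'\<in>Pow C. phicoef x0 \<sigma> \<rho>' * h \<rho>') = (\<Sum>\<rho>'\<in>Pow C. if \<rho>' = (\<lambda>y. x0\<inter>y)`(\<sigma>-{x0}) then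
     (if x0\<in>\<sigma> \<and> inj_on (\<lambda>y. x0\<inter>y) (\<sigma>-{x0})
     then (-1)^card(\<sigma>-{x0}) * h ((\<lambda>y. x0\<inter>y)`(\<sigma>-{x0})) else 0) else 0)"
    by (rule sum.cong) (auto simp: phicoef_alt)
  also have "\<dots> = (if x0\<in>\<sigma> \<and> inj_on (\<lambda>y. x0\<inter>y) (\<sigma>-{x0})
     then (-1)^card(\<sigma>-{x0}) * h ((\<lambda>y. x0\<inter>y)`(\<sigma>-{x0})) else 0)" using assms by (simp add: sum.delta)
  finally show ?thesis .
qed

lemma dcoef_img:
  assumes "inj_on f S"
  shows "dcoef W K (f`S) \<rho> = (\<Sum>y\<in>S. if \<rho> = f`S - {f y} \<and> join W (f`S - {f y}) = join W (f`S)
      then (-1)^rk K (f`S) (f y) else 0)"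
  unfolding dcoef_def by (simp add: sum.reindex[OF assms]) (rule sum.cong; auto)

lemma join_img: "join x0 ((\<lambda>y. x0\<inter>y)`T) = x0 \<inter> \<Inter>T"
  unfolding join_def by auto

lemma join_ins: "join UNIV (insert x0 T) = x0 \<inter> \<Inter>T"
  unfolding join_def by auto

lemma inj_swap:
  assumes "a \<in> S" "b \<in> S" "a \<noteq> b" "f a = f b" "inj_on f (S - {a})"
  shows "inj_on f (S - {b})"
proof (rule inj_onI)
  fix u v assume u: "u \<in> S - {b}" and v: "v \<in> S - {b}" and e: "f u = f v"
  have ia: "\<And>p q. p \<in> S - {a} \<Longrightarrow> q \<in> S - {a} \<Longrightarrow> f p = f q \<Longrightarrow> p = q"
    using assms(5) by (simp add: inj_on_eq_iff)
  have bS: "b \<in> S - {a}" using assms by auto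
  show "u = v"
  proof (cases "u = a")
    case True
    show ?thesis
    proof (rule ccontr)
      assume "u \<noteq> v"
      then have "v \<in> S - {a}" using v True by auto
      then have "v = b" using ia[OF _ bS] e True assms(4) by auto
      then show False using v by auto
    qed
  next
    case False
    show ?thesis
    proof (cases "v = a")
      case True
      then have "u = b" using ia[OF _ bS] e assms(4) u False by auto
      then show ?thesis using u by auto
    next
      case False
      then show ?thesis using ia \<open>u \<noteq> a\<close> u v e by auto
    qed
  qed
qed

lemma key:
  fixes A C :: "'v set set" and x0 :: "'v set" and K K'' :: "'v set \<Rightarrow> nat"
  assumes finA: "finite A" and finC: "finite C" and x0A: "x0 \<in> A" and sA: "\<sigma> \<subseteq> A"
    and Kinj: "inj_on K A" and Kx0: "\<And>y. y\<in>A \<Longrightarrow> y \<noteq> x0 \<Longrightarrow> K x0 < K y"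
    and inC: "\<And>y. y\<in>A \<Longrightarrow> y\<noteq>x0 \<Longrightarrow> x0\<inter>y \<in> C"
    and O1: "\<And>y z w. y\<in>A \<Longrightarrow> z\<in>A \<Longrightarrow> w\<in>A \<Longrightarrow> y\<noteq>x0 \<Longrightarrow> z\<noteq>x0 \<Longrightarrow> w\<noteq>x0
       \<Longrightarrow> K y < K w \<Longrightarrow> K w < K z \<Longrightarrow> x0\<inter>y = x0\<inter>z \<Longrightarrow> x0\<inter>w = x0\<inter>y"
    and O2: "\<And>y z. y\<in>A \<Longrightarrow> z\<in>A \<Longrightarrow> y\<noteq>x0 \<Longrightarrow> z\<noteq>x0 \<Longrightarrow> x0\<inter>y \<noteq> x0\<inter>z
       \<Longrightarrow> (K y \<le> K z \<longleftrightarrow> K'' (x0\<inter>y) \<le> K'' (x0\<inter>z))"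
  shows "(\<Sum>\<tau>\<in>Pow A. dcoef UNIV K \<sigma> \<tau> * phicoef x0 \<tau> \<rho>)
       = (\<Sum>\<rho>'\<in>Pow C. phicoef x0 \<sigma> \<rho>' * dcoef x0 K'' \<rho>' \<rho>)"
proof -
  define f where "f = (\<lambda>y::'v set. x0 \<inter> y)"
  have fsig: "finite \<sigma>" using finA sA finite_subset by blast
  have L: "(\<Sum>\<tau>\<in>Pow A. dcoef UNIV K \<sigma> \<tau> * phicoef x0 \<tau> \<rho>) =
    (\<Sum>y\<in>\<sigma>. if join UNIV (\<sigma> - {y}) = join UNIV \<sigma> then (-1)^rk K \<sigma> y * phicoef x0 (\<sigma>-{y}) \<rho> else 0)"
    by (rule L1[OF finA sA])
  have R: "(\<Sum>\<rho>'\<in>Pow C. phicoef x0 \<sigma> \<rho>' * dcoef x0 K'' \<rho>' \<rho>) =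
    (if x0\<in>\<sigma> \<and> inj_on f (\<sigma>-{x0}) then (-1)^card(\<sigma>-{x0}) * dcoef x0 K'' (f`(\<sigma>-{x0})) \<rho> else 0)"
    unfolding f_def by (rule R1[OF finC]) (use sA inC in auto)
  show ?thesis
  proof (cases "x0 \<in> \<sigma>")
    case False
    have phz: "\<And>y. phicoef x0 (\<sigma>-{y}) \<rho> = 0" using False by (simp add: phicoef_def)
    have "(\<Sum>y\<in>\<sigma>. if join UNIV (\<sigma> - {y}) = join UNIV \<sigma> then (-1)^rk K \<sigma> y * phicoef x0 (\<sigma>-{y}) \<rho> else 0) = 0"
      by (rule sum.neutral) (auto simp: phz)
    then show ?thesis unfolding L R using False by simp
  next
    case True
    define S where "S = \<sigma> - {x0}"
    have sig: "\<sigma> = insert x0 S" and x0S: "x0 \<notin> S" using True S_def by auto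
    have SA: "S \<subseteq> A" using sA S_def by auto
    have finS: "finite S" using fsig S_def by auto
    have Sx0: "\<And>y. y \<in> S \<Longrightarrow> y \<noteq> x0" using x0S by auto
    define g where "g y = (if join UNIV (\<sigma> - {y}) = join UNIV \<sigma> then (-1)^rk K \<sigma> y * phicoef x0 (\<sigma>-{y}) \<rho> else (0::rat))" for y
    have g0: "g x0 = 0" unfolding g_def by (simp add: phicoef_def)
    have LS: "(\<Sum>\<tau>\<in>Pow A. dcoef UNIV K \<sigma> \<tau> * phicoef x0 \<tau> \<rho>) = (\<Sum>y\<in>S. g y)"
    proof -
      have "(\<Sum>y\<in>\<sigma>. g y) = g x0 + (\<Sum>y\<in>\<sigma>-{x0}. g y)" using sum.remove[OF fsig True] .
      then show ?thesis using L g0 S_def unfolding g_def by simp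
    qed
    have sigy: "\<And>y. y \<in> S \<Longrightarrow> \<sigma> - {y} = insert x0 (S - {y})" using sig Sx0 by auto
    have phy: "\<And>y. y \<in> S \<Longrightarrow> phicoef x0 (\<sigma>-{y}) \<rho> =
       (if inj_on f (S-{y}) \<and> \<rho> = f`(S-{y}) then (-1)^card(S-{y}) else 0)"
    proof -
      fix y assume "y \<in> S"
      then have "(\<sigma> - {y}) - {x0} = S - {y}" "x0 \<in> \<sigma> - {y}" using sigy x0S by auto
      then show "?thesis y" unfolding phicoef_alt f_def by simp
    qed
    have rkS: "\<And>y. y \<in> S \<Longrightarrow> rk K \<sigma> y = Suc (rk K S y)"
    proof -
      fix y assume yS: "y \<in> S"
      have "K x0 < K y" using Kx0 yS SA Sx0 by auto
      then have "{z \<in> \<sigma>. K z \<le> K y} = insert x0 {z \<in> S. K z \<le> K y}" using sig by auto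
      then show "?thesis y" unfolding rk_def using x0S finS by simp
    qed
    show ?thesis
    proof (cases "inj_on f S")
      case True
      have RS: "(\<Sum>\<rho>'\<in>Pow C. phicoef x0 \<sigma> \<rho>' * dcoef x0 K'' \<rho>' \<rho>)
        = (-1)^card S * (\<Sum>y\<in>S. if \<rho> = f`S - {f y} \<and> join x0 (f`S - {f y}) = join x0 (f`S)
            then (-1)^rk K'' (f`S) (f y) else 0)"
        using R True S_def \<open>x0 \<in> \<sigma>\<close> dcoef_img[OF True] by simp
      show ?thesis unfolding LS RS sum_distrib_left
      proof (rule sum.cong[OF refl])
        fix y assume yS: "y \<in> S"
        have im: "f`(S-{y}) = f`S - {f y}" using True yS by (auto simp: inj_on_eq_iff)
        have ij: "inj_on f (S-{y})" using True by (rule inj_on_subset) auto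
        have jn: "(join UNIV (\<sigma> - {y}) = join UNIV \<sigma>) = (join x0 (f`S - {f y}) = join x0 (f`S))"
        proof -
          have 1: "join UNIV (\<sigma>-{y}) = x0 \<inter> \<Inter>(S-{y})" unfolding sigy[OF yS] join_ins ..
          have 2: "join UNIV \<sigma> = x0 \<inter> \<Inter>S" unfolding sig join_ins ..
          have 3: "join x0 (f`S - {f y}) = x0 \<inter> \<Inter>(S-{y})" unfolding im[symmetric] unfolding f_def join_img ..
          have 4: "join x0 (f`S) = x0 \<inter> \<Inter>S" unfolding f_def join_img ..
          show ?thesis unfolding 1 2 3 4 ..
        qed
        have rk2: "rk K'' (f`S) (f y) = rk K S y"
        proof -
          have "{u \<in> f`S. K'' u \<le> K'' (f y)} = f ` {z \<in> S. K z \<le> K y}"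
          proof -
            have "\<And>z. z \<in> S \<Longrightarrow> (K'' (f z) \<le> K'' (f y)) = (K z \<le> K y)"
            proof -
              fix z assume zS: "z \<in> S"
              show "(K'' (f z) \<le> K'' (f y)) = (K z \<le> K y)"
              proof (cases "z = y")
                case False
                then have "f z \<noteq> f y" using True zS yS by (auto simp: inj_on_eq_iff)
                then show ?thesis using O2[of z y] zS yS SA Sx0 unfolding f_def by auto
              qed simp
            qed
            then show ?thesis by auto
          qed
          moreover have "card (f ` {z \<in> S. K z \<le> K y}) = card {z \<in> S. K z \<le> K y}"
            by (rule card_image, rule inj_on_subset[OF True]) auto
          ultimately show ?thesis unfolding rk_def by simp
        qed
        have cS: "card S = Suc (card (S - {y}))" using finS yS by (metis card_Suc_Diff1)
        show "g y = (-1)^card S * (if \<rho> = f`S - {f y} \<and> join x0 (f`S - {f y}) = join x0 (f`S)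
            then (-1)^rk K'' (f`S) (f y) else 0)"
          unfolding g_def phy[OF yS] jn rk2 rkS[OF yS] im cS using ij by simp
      qed
    next
      case False
      then have R0: "(\<Sum>\<rho>'\<in>Pow C. phicoef x0 \<sigma> \<rho>' * dcoef x0 K'' \<rho>' \<rho>) = 0"
        using R S_def by simp
      obtain a b where ab: "a \<in> S" "b \<in> S" "a \<noteq> b" "f a = f b" "K a < K b"
      proof -
        obtain p q where pq: "p \<in> S" "q \<in> S" "p \<noteq> q" "f p = f q"
          using False unfolding inj_on_def by auto
        have "K p \<noteq> K q" using Kinj pq SA by (metis inj_on_eq_iff subsetD)
        then show ?thesis
        proof (cases "K p < K q")
          case True then show ?thesis using that pq by auto
        next
          case False then show ?thesis using that[of q p] pq \<open>K p \<noteq> K q\<close> by auto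
        qed
      qed
      have gz: "\<And>w. w \<in> S - {a,b} \<Longrightarrow> g w = 0"
      proof -
        fix w assume w: "w \<in> S - {a,b}"
        have "\<not> inj_on f (S - {w})"
          using ab w unfolding inj_on_def by auto
        then show "g w = 0" unfolding g_def phy[OF DiffD1[OF w]] by simp
      qed
      have "(\<Sum>y\<in>S. g y) = (\<Sum>y\<in>{a,b}. g y)"
        by (rule sum.mono_neutral_right[OF finS]) (use ab gz in auto)
      also have "\<dots> = g a + g b" using ab by simp
      also have "\<dots> = 0"
      proof (cases "inj_on f (S - {a})")
        case False
        then have F2: "\<not> inj_on f (S - {b})" using inj_swap[of b S a f] ab by auto
        show ?thesis unfolding g_def phy[OF ab(1)] phy[OF ab(2)] using False F2 by simp
      next
        case True
        have ijb: "inj_on f (S - {b})" using inj_swap[OF ab(1-4) True] .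
        have ima: "f`(S-{a}) = f`S"
        proof
          show "f`(S-{a}) \<subseteq> f`S" by auto
          show "f`S \<subseteq> f`(S-{a})"
          proof
            fix v assume "v \<in> f`S"
            then obtain u where u: "u \<in> S" "v = f u" by auto
            show "v \<in> f`(S-{a})"
            proof (cases "u = a")
              case True
              then have "v = f b" using u ab by auto
              moreover have "b \<in> S-{a}" using ab by auto
              ultimately show ?thesis by blast
            next
              case False
              then show ?thesis using u by blast
            qed
          qed
        qed
        have imb: "f`(S-{b}) = f`S"
        proof
          show "f`(S-{b}) \<subseteq> f`S" by auto
          show "f`S \<subseteq> f`(S-{b})"
          proof
            fix v assume "v \<in> f`S"
            then obtain u where u: "u \<in> S" "v = f u" by auto
            show "v \<in> f`(S-{b})"
            proof (cases "u = b")
              case True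
              then have "v = f a" using u ab by auto
              moreover have "a \<in> S-{b}" using ab by auto
              ultimately show ?thesis by blast
            next
              case False
              then show ?thesis using u by blast
            qed
          qed
        qed
        have ca: "card (S-{a}) = card (S-{b})" using finS ab by (simp add: card_Diff_singleton)
        have ja: "join UNIV (\<sigma> - {a}) = join UNIV \<sigma>"
        proof -
          have fe: "x0 \<inter> a = x0 \<inter> b" using ab unfolding f_def by simp
          have m: "x0 \<in> \<sigma> - {a}" "b \<in> \<sigma> - {a}" "a \<in> \<sigma>" using ab sig Sx0 by auto
          have sub: "\<Inter>(\<sigma> - {a}) \<subseteq> a"
          proof
            fix t assume "t \<in> \<Inter>(\<sigma> - {a})"
            then have "t \<in> x0 \<inter> b" using m by blast
            then show "t \<in> a" using fe by blast
          qed
          have "\<sigma> = insert a (\<sigma> - {a})" using m by blast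
          then have "\<Inter>\<sigma> = a \<inter> \<Inter>(\<sigma> - {a})" by (metis Inter_insert)
          then have "\<Inter>\<sigma> = \<Inter>(\<sigma> - {a})" using sub by blast
          then show ?thesis unfolding join_def by simp
        qed
        have jb: "join UNIV (\<sigma> - {b}) = join UNIV \<sigma>"
        proof -
          have fe: "x0 \<inter> b = x0 \<inter> a" using ab unfolding f_def by simp
          have m: "x0 \<in> \<sigma> - {b}" "a \<in> \<sigma> - {b}" "b \<in> \<sigma>" using ab sig Sx0 by auto
          have sub: "\<Inter>(\<sigma> - {b}) \<subseteq> b"
          proof
            fix t assume "t \<in> \<Inter>(\<sigma> - {b})"
            then have "t \<in> x0 \<inter> a" using m by blast
            then show "t \<in> b" using fe by blast
          qed
          have "\<sigma> = insert b (\<sigma> - {b})" using m by blast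
          then have "\<Inter>\<sigma> = b \<inter> \<Inter>(\<sigma> - {b})" by (metis Inter_insert)
          then have "\<Inter>\<sigma> = \<Inter>(\<sigma> - {b})" using sub by blast
          then show ?thesis unfolding join_def by simp
        qed
        have rkab: "rk K \<sigma> b = Suc (rk K \<sigma> a)"
        proof -
          have "{w \<in> \<sigma>. K w \<le> K b} = insert b {w \<in> \<sigma>. K w \<le> K a}"
          proof (rule set_eqI, rule iffI)
            fix w assume "w \<in> {w \<in> \<sigma>. K w \<le> K b}"
            then have w: "w \<in> \<sigma>" "K w \<le> K b" by auto
            show "w \<in> insert b {w \<in> \<sigma>. K w \<le> K a}"
            proof (rule ccontr)
              assume nw: "w \<notin> insert b {w \<in> \<sigma>. K w \<le> K a}"
              then have "K a < K w" "w \<noteq> b" using w by auto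
              moreover have "K w \<noteq> K b" using \<open>w \<noteq> b\<close> Kinj w ab sA SA by (metis inj_on_eq_iff subsetD)
              ultimately have lt: "K a < K w" "K w < K b" using w by auto
              have "w \<noteq> x0" using lt Kx0[of a] ab SA Sx0 by auto
              then have wS: "w \<in> S" using w sig by auto
              have "f w = f a" using O1[of a b w] lt ab SA Sx0 wS unfolding f_def by auto
              moreover have "w \<noteq> a" using lt by auto
              ultimately show False using True wS ab \<open>w \<noteq> b\<close>
                by (auto simp: inj_on_eq_iff)
            qed
          qed (use ab sig in auto)
          moreover have "b \<notin> {w \<in> \<sigma>. K w \<le> K a}" using ab by auto
          moreover have "finite {w \<in> \<sigma>. K w \<le> K a}" using fsig by auto
          ultimately show ?thesis unfolding rk_def by simp
        qed
        show ?thesis unfolding g_def phy[OF ab(1)] phy[OF ab(2)] ima imb ca ja jb rkab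
          using True ijb by simp
      qed
      finally show ?thesis using LS R0 by simp
    qed
  qed
qed

lemma lin:
  "phimap x0 A (dmap W A K c) \<rho> = (\<Sum>\<sigma>\<in>Pow A. c \<sigma> * (\<Sum>\<tau>\<in>Pow A. dcoef W K \<sigma> \<tau> * phicoef x0 \<tau> \<rho>))"
proof -
  have "phimap x0 A (dmap W A K c) \<rho> = (\<Sum>\<tau>\<in>Pow A. \<Sum>\<sigma>\<in>Pow A. c \<sigma> * (dcoef W K \<sigma> \<tau> * phicoef x0 \<tau> \<rho>))"
    unfolding phimap_def dmap_def by (simp add: sum_distrib_right mult.assoc)
  also have "\<dots> = (\<Sum>\<sigma>\<in>Pow A. \<Sum>\<tau>\<in>Pow A. c \<sigma> * (dcoef W K \<sigma> \<tau> * phicoef x0 \<tau> \<rho>))"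
    by (rule sum.swap)
  finally show ?thesis by (simp add: sum_distrib_left)
qed

lemma lin2:
  "dmap W C K (phimap x0 A c) \<rho> = (\<Sum>\<sigma>\<in>Pow A. c \<sigma> * (\<Sum>\<rho>'\<in>Pow C. phicoef x0 \<sigma> \<rho>' * dcoef W K \<rho>' \<rho>))"
proof -
  have "dmap W C K (phimap x0 A c) \<rho> = (\<Sum>\<rho>'\<in>Pow C. \<Sum>\<sigma>\<in>Pow A. c \<sigma> * (phicoef x0 \<sigma> \<rho>' * dcoef W K \<rho>' \<rho>))"
    unfolding phimap_def dmap_def by (simp add: sum_distrib_right mult.assoc)
  also have "\<dots> = (\<Sum>\<sigma>\<in>Pow A. \<Sum>\<rho>'\<in>Pow C. c \<sigma> * (phicoef x0 \<sigma> \<rho>' * dcoef W K \<rho>' \<rho>))"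
    by (rule sum.swap)
  finally show ?thesis by (simp add: sum_distrib_left)
qed

lemma keyA_x:
  assumes "inj_on x {0..n}" "i \<le> n"
  shows "keyA n x (x i) = i"
  unfolding keyA_def
proof (rule Least_equality)
  show "i \<le> n \<and> x i = x i" using assms by simp
  fix j assume "j \<le> n \<and> x j = x i"
  then have "j = i" using assms by (auto simp: inj_on_eq_iff)
  then show "i \<le> j" by simp
qed

lemma keyA''_x:
  assumes "1 \<le> i" "i \<le> n"
  shows "1 \<le> keyA'' n x (x 0 \<inter> x i) \<and> keyA'' n x (x 0 \<inter> x i) \<le> n
     \<and> x 0 \<inter> x (keyA'' n x (x 0 \<inter> x i)) = x 0 \<inter> x i"
  unfolding keyA''_def by (rule LeastI[of _ i]) (use assms in simp)

theorem lemma3p1: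
  fixes n :: nat and x :: "nat \<Rightarrow> (complex ^ 'l) set"
    and c :: "(complex ^ 'l) set set \<Rightarrow> rat"
  assumes arr: "is_arrangement n x"
    and order: "\<exists>cls :: nat \<Rightarrow> nat.
                  (\<forall>a\<in>{1..n}. \<forall>b\<in>{1..n}. cls a = cls b \<longleftrightarrow> x 0 \<inter> x a = x 0 \<inter> x b)
                \<and> (\<forall>a\<in>{1..n}. \<forall>b\<in>{1..n}. cls a < cls b \<longrightarrow> a < b)"
    and supp: "\<And>\<sigma>. c \<sigma> \<noteq> 0 \<Longrightarrow> \<sigma> \<subseteq> x ` {0..n}"
  shows "phimap (x 0) (x ` {0..n}) (dmap UNIV (x ` {0..n}) (keyA n x) c)
       = dmap (x 0) ((\<lambda>i. x 0 \<inter> x i) ` {1..n}) (keyA'' n x)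
              (phimap (x 0) (x ` {0..n}) c)"
proof (rule ext)
  fix \<rho>
  obtain cls :: "nat \<Rightarrow> nat" where
    h: "(\<forall>a\<in>{1..n}. \<forall>b\<in>{1..n}. cls a = cls b \<longleftrightarrow> x 0 \<inter> x a = x 0 \<inter> x b)
                \<and> (\<forall>a\<in>{1..n}. \<forall>b\<in>{1..n}. cls a < cls b \<longrightarrow> a < b)"
    using order by (rule exE)
  have ceq: "\<And>a b. a\<in>{1..n} \<Longrightarrow> b\<in>{1..n} \<Longrightarrow> cls a = cls b \<longleftrightarrow> x 0 \<inter> x a = x 0 \<inter> x b"
    using conjunct1[OF h] by simp
  have clt: "\<And>a b. a\<in>{1..n} \<Longrightarrow> b\<in>{1..n} \<Longrightarrow> cls a < cls b \<Longrightarrow> a < b"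
    using conjunct2[OF h] by simp
  have inj: "inj_on x {0..n}" using arr unfolding is_arrangement_def by (rule conjunct1)
  define A where "A = x ` {0..n}"
  define C where "C = (\<lambda>i. x 0 \<inter> x i) ` {1..n}"
  define K where "K = keyA n x"
  define K'' where "K'' = keyA'' n x"
  have Kx: "\<And>i. i \<le> n \<Longrightarrow> K (x i) = i" unfolding K_def using keyA_x[OF inj] by simp
  have Aix: "x (K y) = y" "K y \<le> n" if yA: "y \<in> A" for y
  proof -
    obtain i where "i \<le> n" "y = x i" using yA unfolding A_def by auto
    then show "x (K y) = y" "K y \<le> n" using Kx by auto
  qed
  have Kne: "K y \<in> {1..n}" if "y \<in> A" "y \<noteq> x 0" for y
  proof -
    have "K y \<noteq> 0"
    proof
      assume "K y = 0"
      then have "x (K y) = x 0" by simp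
      then show False using Aix(1)[OF that(1)] that(2) by simp
    qed
    then show ?thesis using Aix(2)[OF that(1)] by simp
  qed
  have key_eq: "\<And>\<sigma>. \<sigma> \<in> Pow A \<Longrightarrow> (\<Sum>\<tau>\<in>Pow A. dcoef UNIV K \<sigma> \<tau> * phicoef (x 0) \<tau> \<rho>)
       = (\<Sum>\<rho>'\<in>Pow C. phicoef (x 0) \<sigma> \<rho>' * dcoef (x 0) K'' \<rho>' \<rho>)"
  proof -
    fix \<sigma> assume "\<sigma> \<in> Pow A"
    then have sA: "\<sigma> \<subseteq> A" by simp
    show "?thesis \<sigma>"
    proof (rule key[OF _ _ _ sA])
      show "finite A" "finite C" unfolding A_def C_def by auto
      show "x 0 \<in> A" unfolding A_def by auto
      show "inj_on K A"
      proof (rule inj_onI)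
        fix u v assume u: "u \<in> A" and v: "v \<in> A" and e: "K u = K v"
        have "x (K u) = x (K v)" using e by simp
        then show "u = v" using Aix(1)[OF u] Aix(1)[OF v] by simp
      qed
      show "K (x 0) < K y" if "y \<in> A" "y \<noteq> x 0" for y
        using Kne[OF that] Kx[of 0] by simp
      show "x 0 \<inter> y \<in> C" if "y \<in> A" "y \<noteq> x 0" for y
      proof -
        have "x 0 \<inter> x (K y) \<in> C" unfolding C_def using Kne[OF that] by blast
        then show ?thesis using Aix(1)[OF that(1)] by simp
      qed
      show "x 0 \<inter> w = x 0 \<inter> y"
        if "y\<in>A" "z\<in>A" "w\<in>A" "y\<noteq>x 0" "z\<noteq>x 0" "w\<noteq>x 0" "K y < K w" "K w < K z" "x 0\<inter>y = x 0\<inter>z"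
        for y z w
      proof -
        have i: "K y \<in> {1..n}" "K z \<in> {1..n}" "K w \<in> {1..n}" using Kne that by auto
        have e: "x (K y) = y" "x (K z) = z" "x (K w) = w" using Aix that by auto
        have cyz: "cls (K y) = cls (K z)" using ceq[OF i(1,2)] that(9) unfolding e by simp
        have "cls (K w) = cls (K y)"
        proof (rule ccontr)
          assume "cls (K w) \<noteq> cls (K y)"
          then consider "cls (K w) < cls (K y)" | "cls (K y) < cls (K w)" by linarith
          then show False
          proof cases
            case 1 then show False using clt[OF i(3,1)] that by simp
          next
            case 2 then have "cls (K z) < cls (K w)" using cyz by simp
            then show False using clt[OF i(2,3)] that by simp
          qed
        qed
        then show ?thesis using ceq[OF i(3,1)] unfolding e by simp
      qed
      show "(K y \<le> K z) = (K'' (x 0 \<inter> y) \<le> K'' (x 0 \<inter> z))"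
        if "y\<in>A" "z\<in>A" "y\<noteq>x 0" "z\<noteq>x 0" "x 0\<inter>y \<noteq> x 0\<inter>z" for y z
      proof -
        have i: "K y \<in> {1..n}" "K z \<in> {1..n}" using Kne that by auto
        have e: "x (K y) = y" "x (K z) = z" using Aix that by auto
        define my where "my = K'' (x 0 \<inter> y)"
        define mz where "mz = K'' (x 0 \<inter> z)"
        have my: "my \<in> {1..n}" "x 0 \<inter> x my = x 0 \<inter> y"
          using keyA''_x[of "K y" n x] i unfolding my_def K''_def e by auto
        have mz: "mz \<in> {1..n}" "x 0 \<inter> x mz = x 0 \<inter> z"
          using keyA''_x[of "K z" n x] i unfolding mz_def K''_def e by auto
        have c1: "cls my = cls (K y)" using ceq[OF my(1) i(1)] my(2) unfolding e by simp
        have c2: "cls mz = cls (K z)" using ceq[OF mz(1) i(2)] mz(2) unfolding e by simp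
        have ne: "cls (K y) \<noteq> cls (K z)" using ceq[OF i] that(5) unfolding e by simp
        then consider "cls (K y) < cls (K z)" | "cls (K z) < cls (K y)" by linarith
        then have "(K y \<le> K z) = (my \<le> mz)"
        proof cases
          case 1
          then have "K y < K z" "my < mz" using clt[OF i] clt[OF my(1) mz(1)] c1 c2 by auto
          then show ?thesis by simp
        next
          case 2
          then have "K z < K y" "mz < my" using clt[OF i(2,1)] clt[OF mz(1) my(1)] c1 c2 by auto
          then show ?thesis by simp
        qed
        then show ?thesis unfolding my_def mz_def .
      qed
    qed
  qed
  show "phimap (x 0) (x ` {0..n}) (dmap UNIV (x ` {0..n}) (keyA n x) c) \<rho>
       = dmap (x 0) ((\<lambda>i. x 0 \<inter> x i) ` {1..n}) (keyA'' n x) (phimap (x 0) (x ` {0..n}) c) \<rho>"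
    unfolding A_def[symmetric] C_def[symmetric] K_def[symmetric] K''_def[symmetric] lin lin2
    by (rule sum.cong[OF refl]) (simp add: key_eq)
qed
end
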